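(* Let $\lambda>0$, $A\in\mathbb{R}^{m\times n}$, $b\in\mathbb{R}^m$, let $q=q_1-q_2:\mathbb{R}^m\to[0,+\infty)$ where $q_1:\mathbb{R}^m\to\mathbb{R}$ is continuously differentiable with Lipschitz continuous gradient and $q_2:\mathbb{R}^m\to\mathbb{R}$ is convex and continuous, and let $\mathcal{X}\subseteq\mathbb{R}^n$ be a closed hyperrectangle (possibly unbounded) with $0\in\mathcal{X}$. Set $\Phi(x):=\lambda\frac{\|x\|_1^2}{\|x\|_2^2}+q(Ax-b)$ for $x\neq 0$ and $\nu^\star:=\inf\{\Phi(x):x\in\mathcal{X}\setminus\{0\}\}$, and assume $\nu^\star<\lambda+q(-b)$. Let $\{x^k:k\in\mathbb{N}\}$ be a minimizing sequence, i.e. $x^k\in\mathcal{X}\setminus\{0\}$ for all $k$ and $\lim_{k\to\infty}\Phi(x^k)=\nu^\star$. Then every accumulation point $x^\star$ of $\{x^k\}$ is an optimal solution, i.e. $x^\star\in\mathcal{X}\setminus\{0\}$ and $\Phi(x^\star)=\nu^\star$.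
   Context: A closed hyperrectangle is a set $\{x\in\mathbb{R}^n:\underline{x}\le x\le\overline{x}\}$ (componentwise) with $\underline{x}\in(\mathbb{R}\cup\{-\infty\})^n$, $\overline{x}\in(\mathbb{R}\cup\{+\infty\})^n$. The problem considered is $\min_{x\in\mathcal{X}}\Phi(x)$; an optimal solution is a point of $\mathcal{X}\setminus\{0\}$ at which $\Phi$ attains $\nu^\star$. The inequality $\nu^\star<\lambda+q(-b)$ is a standing assumption of the paper (it excludes the trivial solution $0$). *)

theory Defs
  imports "HOL-Analysis.Analysis"
begin

definition l1norm :: "real ^ 'n \<Rightarrow> real" where
  "l1norm x = (\<Sum>i\<in>UNIV. \<bar>x $ i\<bar>)"

definition hyperrect :: "('n \<Rightarrow> ereal) \<Rightarrow> ('n \<Rightarrow> ereal) \<Rightarrow> (real ^ 'n) set" where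
  "hyperrect lo hi = {x. \<forall>i. lo i \<le> ereal (x $ i) \<and> ereal (x $ i) \<le> hi i}"

definition Phi :: "real \<Rightarrow> (real ^ 'm \<Rightarrow> real) \<Rightarrow> real ^ 'n ^ 'm \<Rightarrow> real ^ 'm \<Rightarrow> real ^ 'n \<Rightarrow> real" where
  "Phi lam q A b x = lam * (l1norm x)\<^sup>2 / (norm x)\<^sup>2 + q (A *v x - b)"

end

theory Submission
  imports Defs
begin

lemma norm_le_l1norm: "norm (x::real^'n) \<le> l1norm x"
  unfolding norm_vec_def l1norm_def using L2_set_le_sum_abs[of "\<lambda>i. norm (x$i)" UNIV] by simp

theorem lemma3p1:
  fixes lam :: real
    and A :: "real ^ 'n ^ 'm" and b :: "real ^ 'm"
    and q1 q2 :: "real ^ 'm \<Rightarrow> real"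
    and grad :: "real ^ 'm \<Rightarrow> real ^ 'm"
    and L :: real
    and lo hi :: "'n \<Rightarrow> ereal"
    and xs :: "nat \<Rightarrow> real ^ 'n"
    and xstar :: "real ^ 'n"
  assumes lam_pos: "lam > 0"
    and q1_grad: "\<And>y. (q1 has_derivative (\<lambda>h. grad y \<bullet> h)) (at y)"
    and grad_lip: "L-lipschitz_on UNIV grad"
    and q2_convex: "convex_on UNIV q2"
    and q2_cont: "continuous_on UNIV q2"
    and q_nonneg: "\<And>y. q1 y - q2 y \<ge> 0"
    and lo_fin: "\<And>i. lo i \<noteq> PInfty"
    and hi_fin: "\<And>i. hi i \<noteq> MInfty"
    and zero_in: "0 \<in> hyperrect lo hi"
    and nu_lt: "(INF x\<in>hyperrect lo hi - {0}. Phi lam (\<lambda>y. q1 y - q2 y) A b x)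
                  < lam + (q1 (- b) - q2 (- b))"
    and xs_in: "\<And>k. xs k \<in> hyperrect lo hi - {0}"
    and xs_min: "(\<lambda>k. Phi lam (\<lambda>y. q1 y - q2 y) A b (xs k)) \<longlonglongrightarrow>
                  (INF x\<in>hyperrect lo hi - {0}. Phi lam (\<lambda>y. q1 y - q2 y) A b x)"
    and acc: "\<exists>r. strict_mono r \<and> (xs \<circ> r) \<longlonglongrightarrow> xstar"
  shows "xstar \<in> hyperrect lo hi - {0}
    \<and> Phi lam (\<lambda>y. q1 y - q2 y) A b xstar
        = (INF x\<in>hyperrect lo hi - {0}. Phi lam (\<lambda>y. q1 y - q2 y) A b x)"
proof -
  define f where "f = Phi lam (\<lambda>y. q1 y - q2 y) A b"
  define nu where "nu = (INF x\<in>hyperrect lo hi - {0}. f x)"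
  obtain r where r: "strict_mono r" "(xs \<circ> r) \<longlonglongrightarrow> xstar" using acc by blast
  define y where "y = xs \<circ> r"
  have ylim: "y \<longlonglongrightarrow> xstar" using r y_def by simp
  have fy: "(\<lambda>k. f (y k)) \<longlonglongrightarrow> nu"
    using LIMSEQ_subseq_LIMSEQ[OF xs_min[folded f_def nu_def] r(1)] by (simp add: y_def comp_def)
  have yin: "y k \<in> hyperrect lo hi - {0}" for k using xs_in by (simp add: y_def)
  have q1c: "continuous_on UNIV q1"
    by (meson continuous_at_imp_continuous_on has_derivative_continuous q1_grad)
  have qc: "continuous_on UNIV (\<lambda>z. q1 z - q2 z)"
    by (intro continuous_intros q1c q2_cont)
  have inrect: "xstar \<in> hyperrect lo hi"
    unfolding hyperrect_def
  proof (safe)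
    fix i
    have ci: "(\<lambda>k. ereal (y k $ i)) \<longlonglongrightarrow> ereal (xstar $ i)"
      by (intro tendsto_intros ylim)
    have "lo i \<le> ereal (y k $ i) \<and> ereal (y k $ i) \<le> hi i" for k
      using yin[of k] unfolding hyperrect_def by auto
    then show "lo i \<le> ereal (xstar $ i)" "ereal (xstar $ i) \<le> hi i"
      using LIMSEQ_le_const[OF ci] LIMSEQ_le_const2[OF ci] by auto
  qed
  have nz: "xstar \<noteq> 0"
  proof
    assume x0: "xstar = 0"
    have "(\<lambda>k. A *v y k - b) \<longlonglongrightarrow> A *v xstar - b"
      by (intro tendsto_intros ylim bounded_linear.tendsto[OF matrix_vector_mul_bounded_linear])
    then have "(\<lambda>k. A *v y k - b) \<longlonglongrightarrow> - b" using x0 by simp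
    then have ql: "(\<lambda>k. lam + (q1 (A *v y k - b) - q2 (A *v y k - b))) \<longlonglongrightarrow> lam + (q1 (-b) - q2 (-b))"
      by (intro tendsto_intros continuous_on_tendsto_compose[OF qc]) auto
    have "lam + (q1 (A *v y k - b) - q2 (A *v y k - b)) \<le> f (y k)" for k
    proof -
      have "y k \<noteq> 0" using yin[of k] by auto
      then have np: "(norm (y k))\<^sup>2 > 0" by simp
      have "(norm (y k))\<^sup>2 \<le> (l1norm (y k))\<^sup>2"
        using norm_le_l1norm[of "y k"] by (intro power_mono) auto
      then have "1 \<le> (l1norm (y k))\<^sup>2 / (norm (y k))\<^sup>2" using np by simp
      then have "lam \<le> lam * ((l1norm (y k))\<^sup>2 / (norm (y k))\<^sup>2)"
        using lam_pos by (metis mult.right_neutral mult_left_mono less_imp_le)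
      then show ?thesis unfolding f_def Phi_def by simp
    qed
    then have "lam + (q1 (-b) - q2 (-b)) \<le> nu"
      using LIMSEQ_le[OF ql fy] by auto
    then show False using nu_lt[folded f_def nu_def] by simp
  qed
  have "(\<lambda>k. f (y k)) \<longlonglongrightarrow> f xstar"
  proof -
    have a: "(\<lambda>k. A *v y k - b) \<longlonglongrightarrow> A *v xstar - b"
      by (intro tendsto_intros ylim bounded_linear.tendsto[OF matrix_vector_mul_bounded_linear])
    have ql: "(\<lambda>k. q1 (A *v y k - b) - q2 (A *v y k - b)) \<longlonglongrightarrow> q1 (A *v xstar - b) - q2 (A *v xstar - b)"
      by (intro continuous_on_tendsto_compose[OF qc a]) auto
    have l1: "(\<lambda>k. l1norm (y k)) \<longlonglongrightarrow> l1norm xstar"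
      unfolding l1norm_def by (intro tendsto_intros ylim)
    have n: "(\<lambda>k. norm (y k)) \<longlonglongrightarrow> norm xstar" by (intro tendsto_intros ylim)
    have "(norm xstar)\<^sup>2 \<noteq> 0" using nz by simp
    from tendsto_add[OF tendsto_divide[OF tendsto_mult[OF tendsto_const[of lam] tendsto_power[OF l1, of 2]] tendsto_power[OF n, of 2] this] ql]
    show ?thesis unfolding f_def Phi_def by simp
  qed
  then have "f xstar = nu" using fy LIMSEQ_unique by blast
  then show ?thesis using inrect nz unfolding f_def nu_def by simp
qed

end
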